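(* Let $S$ be an operator system that is positively generated, i.e. $S^{sa}=S^+-S^+$. Then for each $n\ge1$, $M_n(S)^{sa}=M_n(S)^+-M_n(S)^+$.
   Context: An operator system here is a (possibly nonunital) matrix ordered operator space $S$ (operator space with completely isometric involution and closed matrix cones $M_n(S)^+\subseteq M_n(S)^{sa}$) that admits a completely isometric complete order embedding into $B(H)$ for some Hilbert space $H$. *)

theory Defs
  imports Complex_Main
begin

class complex_vector = real_vector +
  fixes scaleC :: "complex \<Rightarrow> 'a \<Rightarrow> 'a" (infixr "*\<^sub>C" 75)
  assumes scaleC_add_right: "a *\<^sub>C (x + y) = a *\<^sub>C x + a *\<^sub>C y"
    and scaleC_add_left: "(a + b) *\<^sub>C x = a *\<^sub>C x + b *\<^sub>C x"
    and scaleC_scaleC: "a *\<^sub>C (b *\<^sub>C x) = (a * b) *\<^sub>C x"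
    and scaleC_one: "1 *\<^sub>C x = x"
    and scaleR_scaleC: "r *\<^sub>R x = complex_of_real r *\<^sub>C x"

class complex_normed_vector = complex_vector + real_normed_vector +
  assumes norm_scaleC: "norm (a *\<^sub>C x) = cmod a * norm x"

class complex_inner = complex_normed_vector +
  fixes cinner :: "'a \<Rightarrow> 'a \<Rightarrow> complex"
  assumes cinner_commute: "cinner x y = cnj (cinner y x)"
    and cinner_add_right: "cinner x (y + z) = cinner x y + cinner x z"
    and cinner_scaleC_right: "cinner x (a *\<^sub>C y) = a * cinner x y"
    and cinner_ge_zero: "0 \<le> Re (cinner x x)"
    and cinner_eq_zero_iff: "cinner x x = 0 \<longleftrightarrow> x = 0"
    and norm_eq_sqrt_cinner: "norm x = sqrt (Re (cinner x x))"

class chilbert_space = complex_inner + complete_space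

definition clinear :: "('a::complex_vector \<Rightarrow> 'b::complex_vector) \<Rightarrow> bool" where
  "clinear f \<longleftrightarrow> (\<forall>x y. f (x + y) = f x + f y) \<and> (\<forall>a x. f (a *\<^sub>C x) = a *\<^sub>C f x)"

definition bounded_ops :: "('h::chilbert_space \<Rightarrow> 'h) set" where
  "bounded_ops = {T. clinear T \<and> (\<exists>K. \<forall>x. norm (T x) \<le> K * norm x)}"

definition is_adjoint :: "('h::complex_inner \<Rightarrow> 'h) \<Rightarrow> ('h \<Rightarrow> 'h) \<Rightarrow> bool" where
  "is_adjoint T U \<longleftrightarrow> (\<forall>x y. cinner (T x) y = cinner x (U y))"

text \<open>An n x n matrix [T_ij] of operators on H (entries indexed by i,j < n) is positive
  as an operator on H^n: <xi, [T_ij] xi> >= 0 for all xi in H^n.\<close>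
definition pos_op_matrix :: "nat \<Rightarrow> (nat \<Rightarrow> nat \<Rightarrow> ('h::complex_inner \<Rightarrow> 'h)) \<Rightarrow> bool" where
  "pos_op_matrix n T \<longleftrightarrow>
     (\<forall>\<xi> :: nat \<Rightarrow> 'h.
        let q = (\<Sum>i<n. \<Sum>j<n. cinner (\<xi> i) (T i j (\<xi> j))) in Im q = 0 \<and> 0 \<le> Re q)"

text \<open>Data of a (possibly nonunital) matrix ordered space: an involution \<open>star\<close> on S and
  cones \<open>cone n \<subseteq> M_n(S)\<close>, where an element of M_n(S) is represented by a function
  \<open>nat \<Rightarrow> nat \<Rightarrow> 'S\<close> of which only the entries with indices < n matter.
  \<open>op_sys_embedding star cone \<phi>\<close> says that \<phi> : S \<rightarrow> B(H) is an injective complex-linear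
  *-map which is a complete order embedding: [x_ij] \<in> M_n(S)^+ iff [\<phi> x_ij] \<ge> 0 in M_n(B(H)).\<close>
definition op_sys_embedding ::
  "('s::complex_vector \<Rightarrow> 's) \<Rightarrow> (nat \<Rightarrow> (nat \<Rightarrow> nat \<Rightarrow> 's) set) \<Rightarrow> ('s \<Rightarrow> ('h::chilbert_space \<Rightarrow> 'h)) \<Rightarrow> bool"
  where
  "op_sys_embedding star cone \<phi> \<longleftrightarrow>
     (\<forall>x. star (star x) = x) \<and>
     (\<forall>x y. star (x + y) = star x + star y) \<and>
     (\<forall>a x. star (a *\<^sub>C x) = cnj a *\<^sub>C star x) \<and>
     inj \<phi> \<and>
     (\<forall>x y h. \<phi> (x + y) h = \<phi> x h + \<phi> y h) \<and>
     (\<forall>a x h. \<phi> (a *\<^sub>C x) h = a *\<^sub>C \<phi> x h) \<and> (\<forall>x. \<phi> x \<in> bounded_ops) \<and>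
     (\<forall>x. is_adjoint (\<phi> x) (\<phi> (star x))) \<and>
     (\<forall>n X. X \<in> cone n \<longleftrightarrow> pos_op_matrix n (\<lambda>i j. \<phi> (X i j)))"

definition mat_sa :: "('s \<Rightarrow> 's) \<Rightarrow> nat \<Rightarrow> (nat \<Rightarrow> nat \<Rightarrow> 's) set" where
  "mat_sa star n = {X. \<forall>i<n. \<forall>j<n. X j i = star (X i j)}"

definition cone_diff :: "(nat \<Rightarrow> (nat \<Rightarrow> nat \<Rightarrow> 's::ab_group_add) set) \<Rightarrow> nat \<Rightarrow> (nat \<Rightarrow> nat \<Rightarrow> 's) set" where
  "cone_diff cone n = {X. \<exists>P\<in>cone n. \<exists>Q\<in>cone n. \<forall>i<n. \<forall>j<n. X i j = P i j - Q i j}"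

definition pos_part :: "(nat \<Rightarrow> (nat \<Rightarrow> nat \<Rightarrow> 's) set) \<Rightarrow> 's set" where
  "pos_part cone = {x. (\<lambda>i j. x) \<in> cone 1}"

definition positively_generated :: "('s::ab_group_add \<Rightarrow> 's) \<Rightarrow> (nat \<Rightarrow> (nat \<Rightarrow> nat \<Rightarrow> 's) set) \<Rightarrow> bool" where
  "positively_generated star cone \<longleftrightarrow>
     {x. star x = x} = {p - q | p q. p \<in> pos_part cone \<and> q \<in> pos_part cone}"

end

theory Submission
  imports Defs
begin


lemma addhom:
  fixes f :: "'a::ab_group_add \<Rightarrow> 'b::ab_group_add"
  assumes "\<And>x y. f (x + y) = f x + f y"
  shows "f 0 = 0" "f (- x) = - f x" "f (x - y) = f x - f y" "f (sum g A) = (\<Sum>a\<in>A. f (g a))"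
proof -
  show f0: "f 0 = 0" using assms[of 0 0] by simp
  show fm: "\<And>x. f (- x) = - f x" using assms f0 by (metis add.right_inverse add_eq_0_iff)
  show "f (x - y) = f x - f y" using assms fm by (metis diff_conv_add_uminus)
  show "f (sum g A) = (\<Sum>a\<in>A. f (g a))"
    by (induction A rule: infinite_finite_induct) (auto simp: f0 assms)
qed

lemma scaleC_right_hom: "(a::complex) *\<^sub>C (x + y) = a *\<^sub>C x + a *\<^sub>C (y::'a::complex_vector)"
  by (rule scaleC_add_right)

lemmas scC_r = addhom[of "scaleC a" for a, OF scaleC_add_right]
lemmas scC_l = addhom[of "\<lambda>a. scaleC a x" for x, OF scaleC_add_left]

lemma cinner_r: "cinner (x::'a::complex_inner) 0 = 0" "cinner x (sum g A) = (\<Sum>a\<in>A. cinner x (g a))"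
  "cinner x (y - z) = cinner x y - cinner x z"
  using addhom[of "cinner x", OF cinner_add_right] by auto

lemma cinner_sum_left: "cinner (sum g A) (y::'a::complex_inner) = (\<Sum>a\<in>A. cinner (g a) y)"
  by (subst cinner_commute) (simp add: cinner_r cnj_sum cinner_commute[of y])

lemma cinner_scaleC_left: "cinner (a *\<^sub>C x) (y::'a::complex_inner) = cnj a * cinner x y"
  by (subst cinner_commute) (simp add: cinner_scaleC_right cinner_commute[of y])

lemma cinner_zero_left: "cinner 0 (y::'a::complex_inner) = 0"
  by (subst cinner_commute) (simp add: cinner_r)

lemma test: "(\<Sum>t\<in>A\<times>B\<times>C. f t) = (\<Sum>i\<in>A. \<Sum>j\<in>B. \<Sum>k\<in>C. f (i,j,k))"
  by (simp add: sum.cartesian_product)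

lemma E: assumes "op_sys_embedding star cone \<phi>"
  shows "star (star x) = x" "star (x + y) = star x + star y" "star (a *\<^sub>C x) = cnj a *\<^sub>C star x"
    "inj \<phi>" "\<phi> (x + y) h = \<phi> x h + \<phi> y h" "\<phi> (a *\<^sub>C x) h = a *\<^sub>C \<phi> x h"
    "\<phi> x (h + k) = \<phi> x h + \<phi> x k" "\<phi> x (a *\<^sub>C h) = a *\<^sub>C \<phi> x h"
    "cinner (\<phi> x h) k = cinner h (\<phi> (star x) k)"
    "X \<in> cone n \<longleftrightarrow> pos_op_matrix n (\<lambda>i j. \<phi> (X i j))"
  using assms unfolding op_sys_embedding_def bounded_ops_def clinear_def is_adjoint_def by auto

lemma E2: assumes "op_sys_embedding star cone \<phi>"
  shows "star (x - y) = star x - star y" "\<phi> 0 h = 0" "\<phi> x 0 = 0" "\<phi> (sum g A) h = (\<Sum>a\<in>A. \<phi> (g a) h)"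
    "\<phi> x (sum g' A) = (\<Sum>a\<in>A. \<phi> x (g' a))" "\<phi> x (h - k) = \<phi> x h - \<phi> x k"
  using addhom[of star, OF E(2)[OF assms]] addhom[of "\<lambda>x. \<phi> x h", OF E(5)[OF assms]]
    addhom[of "\<phi> x", OF E(7)[OF assms]] by auto

lemma cone_add: assumes A: "op_sys_embedding star cone \<phi>" and "P \<in> cone n" "Q \<in> cone n"
  shows "(\<lambda>i j. P i j + Q i j) \<in> cone n"
  using assms(2,3) unfolding E(10)[OF A] pos_op_matrix_def Let_def
  by (simp add: E[OF A] cinner_add_right sum.distrib)

lemma cone_zero: assumes A: "op_sys_embedding star cone \<phi>"
  shows "(\<lambda>i j. 0) \<in> cone n"
  unfolding E(10)[OF A] pos_op_matrix_def Let_def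
  by (simp add: E2[OF A] cinner_r)

lemma cone_sum: assumes A: "op_sys_embedding star cone \<phi>" and "finite F" "\<forall>t\<in>F. M t \<in> cone n"
  shows "(\<lambda>i j. \<Sum>t\<in>F. M t i j) \<in> cone n"
  using assms(2,3)
proof (induction F rule: finite_induct)
  case empty
  then show ?case using cone_zero[OF A] by simp
next
  case (insert x F)
  then show ?case using cone_add[OF A, of "M x" n "\<lambda>i j. \<Sum>t\<in>F. M t i j"] by simp
qed

lemma cone_rank1: assumes A: "op_sys_embedding star cone \<phi>" and p: "p \<in> pos_part cone"
  shows "(\<lambda>i j. (v i * cnj (v j)) *\<^sub>C p) \<in> cone n"
proof -
  have p1: "pos_op_matrix 1 (\<lambda>i j. \<phi> p)" using p E(10)[OF A] unfolding pos_part_def by auto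
  show ?thesis unfolding E(10)[OF A] pos_op_matrix_def Let_def
  proof
    fix \<xi> :: "nat \<Rightarrow> 'b"
    define \<eta> where "\<eta> = (\<Sum>i<n. cnj (v i) *\<^sub>C \<xi> i)"
    have "(\<Sum>i<n. \<Sum>j<n. cinner (\<xi> i) (\<phi> ((v i * cnj (v j)) *\<^sub>C p) (\<xi> j)))
        = cinner \<eta> (\<phi> p \<eta>)"
      unfolding \<eta>_def
      by (simp add: E[OF A] E2[OF A] cinner_r cinner_sum_left cinner_scaleC_left cinner_scaleC_right
          sum_distrib_left mult.assoc) (subst sum.swap, simp add: mult_ac)
    moreover have "Im (cinner \<eta> (\<phi> p \<eta>)) = 0 \<and> 0 \<le> Re (cinner \<eta> (\<phi> p \<eta>))"
      using p1 unfolding pos_op_matrix_def Let_def by (auto dest: spec[of _ "\<lambda>_. \<eta>"])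
    ultimately show "Im (\<Sum>i<n. \<Sum>j<n. cinner (\<xi> i) (\<phi> ((v i * cnj (v j)) *\<^sub>C p) (\<xi> j))) = 0 \<and>
          0 \<le> Re (\<Sum>i<n. \<Sum>j<n. cinner (\<xi> i) (\<phi> ((v i * cnj (v j)) *\<^sub>C p) (\<xi> j)))" by simp
  qed
qed



lemma combo: assumes A: "op_sys_embedding star cone \<phi>" and G: "positively_generated star cone"
  and F: "finite F" and c: "\<forall>t\<in>F. star (c t) = c t"
  shows "(\<lambda>r s. \<Sum>t\<in>F. (v t r * cnj (v t s)) *\<^sub>C c t) \<in> cone_diff cone n"
proof -
  have "\<forall>t\<in>F. \<exists>pq. fst pq \<in> pos_part cone \<and> snd pq \<in> pos_part cone \<and> c t = fst pq - snd pq"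
    using c G unfolding positively_generated_def by (fastforce simp: set_eq_iff)
  then obtain pq where pq: "\<And>t. t\<in>F \<Longrightarrow> fst (pq t) \<in> pos_part cone \<and> snd (pq t) \<in> pos_part cone \<and> c t = fst (pq t) - snd (pq t)"
    by metis
  let ?P = "\<lambda>r s. \<Sum>t\<in>F. (v t r * cnj (v t s)) *\<^sub>C fst (pq t)"
  let ?Q = "\<lambda>r s. \<Sum>t\<in>F. (v t r * cnj (v t s)) *\<^sub>C snd (pq t)"
  have hP: "?P \<in> cone n"
    using cone_sum[OF A F, of "\<lambda>t r s. (v t r * cnj (v t s)) *\<^sub>C fst (pq t)"] cone_rank1[OF A] pq by auto
  have hQ: "?Q \<in> cone n"
    using cone_sum[OF A F, of "\<lambda>t r s. (v t r * cnj (v t s)) *\<^sub>C snd (pq t)"] cone_rank1[OF A] pq by auto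
  have heq: "\<forall>i<n. \<forall>j<n. (\<Sum>t\<in>F. (v t i * cnj (v t j)) *\<^sub>C c t) = ?P i j - ?Q i j"
  proof (intro allI impI)
    fix i j
    have "(\<Sum>t\<in>F. (v t i * cnj (v t j)) *\<^sub>C c t) = (\<Sum>t\<in>F. (v t i * cnj (v t j)) *\<^sub>C fst (pq t) - (v t i * cnj (v t j)) *\<^sub>C snd (pq t))"
      by (rule sum.cong) (auto simp: pq scC_r)
    then show "(\<Sum>t\<in>F. (v t i * cnj (v t j)) *\<^sub>C c t) = ?P i j - ?Q i j"
      by (simp add: sum_subtractf)
  qed
  show ?thesis unfolding cone_diff_def mem_Collect_eq
  proof (rule bexI[where x="?P"], rule bexI[where x="?Q"])
    show "\<forall>i<n. \<forall>j<n. (\<Sum>t\<in>F. (v t i * cnj (v t j)) *\<^sub>C c t) = ?P i j - ?Q i j" by (rule heq)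
  qed (rule hQ, rule hP)
qed

lemma herm_form: fixes u w :: complex
  assumes "\<And>z. Im (z * u + cnj z * w) = 0"
  shows "w = cnj u"
proof -
  have "Im (u + w) = 0" using assms[of 1] by simp
  moreover have "Im (\<i> * u - \<i> * w) = 0" using assms[of "\<i>"] by simp
  ultimately show ?thesis by (simp add: complex_eq_iff)
qed

lemma sum_two: fixes g :: "nat \<Rightarrow> 'a::ab_group_add \<Rightarrow> 'b::ab_group_add"
  assumes g: "\<And>l x y. g l (x+y) = g l x + g l y" and "i<n" "j<n"
  shows "(\<Sum>l<n. g l ((if l = i then a else 0) + (if l = j then b else 0))) = g i a + g j b"
proof -
  have g0: "g l 0 = 0" for l using addhom(1)[of "g l", OF g] .
  have "g l ((if l = i then a else 0) + (if l = j then b else 0)) = (if l=i then g l a else 0) + (if l=j then g l b else 0)" for l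
    by (simp add: g g0)
  then show ?thesis using assms(2,3) by (simp add: sum.distrib)
qed

lemma cinner_add_left: "cinner (x + y) (z::'a::complex_inner) = cinner x z + cinner y z"
  by (subst cinner_commute) (simp add: cinner_add_right cinner_commute[of z])

lemma cone_herm: assumes A: "op_sys_embedding star cone \<phi>" and P: "P \<in> cone n"
  and ij: "i < n" "j < n"
  shows "P j i = star (P i j)"
proof -
  have pos: "pos_op_matrix n (\<lambda>i j. \<phi> (P i j))" using P E(10)[OF A] by auto
  define T where "T = (\<lambda>i j. \<phi> (P i j))"
  have Q: "(\<Sum>k<n. \<Sum>l<n. cinner ((if k = i then a else 0) + (if k = j then b else 0))
           (T k l ((if l = i then a else 0) + (if l = j then b else 0))))
     = cinner a (T i i a) + cinner a (T i j b) + cinner b (T j i a) + cinner b (T j j b)" for a b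
  proof -
    have "(\<Sum>k<n. \<Sum>l<n. cinner ((if k = i then a else 0) + (if k = j then b else 0))
           (T k l ((if l = i then a else 0) + (if l = j then b else 0))))
      = (\<Sum>l<n. cinner a (T i l ((if l = i then a else 0) + (if l = j then b else 0))))
       + (\<Sum>l<n. cinner b (T j l ((if l = i then a else 0) + (if l = j then b else 0))))"
      by (rule sum_two[OF _ ij]) (simp add: cinner_add_left sum.distrib)
    also have "\<dots> = cinner a (T i i a) + cinner a (T i j b) + (cinner b (T j i a) + cinner b (T j j b))"
      by (subst sum_two[OF _ ij], simp add: T_def E[OF A] cinner_add_right)+ simp
    finally show ?thesis by (simp add: add.assoc)
  qed
  have h: "Im (\<Sum>k<n. \<Sum>l<n. cinner (\<xi> k) (T k l (\<xi> l))) = 0" for \<xi>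
    using pos unfolding pos_op_matrix_def Let_def T_def by blast
  have real: "Im (cinner a (T i i a) + cinner a (T i j b) + cinner b (T j i a) + cinner b (T j j b)) = 0" for a b
    using h[of "\<lambda>k. (if k = i then a else 0) + (if k = j then b else 0)"] by (simp only: Q)
  have "cinner b (T j i a) = cnj (cinner a (T i j b))" for a b
  proof (rule herm_form)
    fix z
    have r1: "Im (cinner a (T i i a)) = 0" using real[of a 0] by (simp add: T_def E2[OF A] cinner_r cinner_zero_left)
    have r2: "Im (cinner (z *\<^sub>C b) (T j j (z *\<^sub>C b))) = 0" using real[of 0 "z *\<^sub>C b"] by (simp add: T_def E2[OF A] cinner_r cinner_zero_left)
    show "Im (z * cinner a (T i j b) + cnj z * cinner b (T j i a)) = 0"
      using real[of a "z *\<^sub>C b"] r1 r2 by (simp add: T_def E[OF A] cinner_scaleC_right cinner_scaleC_left)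
  qed
  hence "cinner b (\<phi> (P j i) a) = cinner b (\<phi> (star (P i j)) a)" for a b
    by (simp add: T_def E(9)[OF A, symmetric] cinner_commute[of "\<phi> _ _"])
  hence "cinner (\<phi> (P j i) a - \<phi> (star (P i j)) a) (\<phi> (P j i) a - \<phi> (star (P i j)) a) = 0" for a
    by (simp add: cinner_r cinner_commute[of "_ - _"])
  hence "\<phi> (P j i) = \<phi> (star (P i j))" by (simp add: cinner_eq_zero_iff fun_eq_iff)
  thus ?thesis using E(4)[OF A] by (simp add: inj_eq)
qed


lemma four: "(\<Sum>k<(4::nat). f k) = f 0 + f 1 + f 2 + (f 3 :: complex)"
  by (simp add: numeral_eq_Suc lessThan_Suc)
lemma i_pows: "\<i> ^ 2 = -1" "\<i> ^ 3 = - \<i>" by (simp_all add: power2_eq_square power3_eq_cube)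
definition VV :: "nat \<Rightarrow> nat \<Rightarrow> nat \<Rightarrow> nat \<Rightarrow> complex" where
  "VV i j k r = (if r = i then 1 else 0) + \<i> ^ k * (if r = j then 1 else 0)"
lemma S1: "(\<Sum>k<(4::nat). VV i j k r * cnj (VV i j k s) * \<i> ^ k / 8) = (if r = i \<and> s = j then 1/2 else 0)"
  unfolding four VV_def i_pows
  by (cases "r=i"; cases "s=j"; cases "r=j"; cases "s=i"; simp add: complex_eq_iff)
lemma S2: "(\<Sum>k<(4::nat). VV i j k r * cnj (VV i j k s) * cnj (\<i> ^ k) / 8) = (if r = j \<and> s = i then 1/2 else 0)"
  unfolding four VV_def i_pows
  by (cases "r=i"; cases "s=j"; cases "r=j"; cases "s=i"; simp add: complex_eq_iff)

lemma dsum: fixes g :: "nat \<Rightarrow> nat \<Rightarrow> 'a::comm_monoid_add"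
  assumes "r < n" "s < n"
  shows "(\<Sum>i<n. \<Sum>j<n. (if r = i \<and> s = j then g i j else 0)) = g r s"
proof -
  have "(\<Sum>i<n. \<Sum>j<n. (if r = i \<and> s = j then g i j else 0)) = (\<Sum>i<n. if r = i then (\<Sum>j<n. if s = j then g i j else 0) else 0)"
    by (rule sum.cong) auto
  also have "\<dots> = g r s" using assms by simp
  finally show ?thesis .
qed

lemma dsum': fixes g :: "nat \<Rightarrow> nat \<Rightarrow> 'a::comm_monoid_add"
  assumes "r < n" "s < n"
  shows "(\<Sum>i<n. \<Sum>j<n. (if r = j \<and> s = i then g i j else 0)) = g s r"
proof -
  have "(\<Sum>i<n. \<Sum>j<n. (if r = j \<and> s = i then g i j else 0)) = (\<Sum>i<n. if s = i then (\<Sum>j<n. if r = j then g i j else 0) else 0)"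
    by (rule sum.cong) auto
  also have "\<dots> = g s r" using assms by simp
  finally show ?thesis .
qed

lemma scaleC_zero_left: "(0::complex) *\<^sub>C x = 0" by (rule scC_l(1))
lemma if_scale: "(if P then a else 0) *\<^sub>C x = (if P then a *\<^sub>C x else 0)"
  by (simp add: scaleC_zero_left)

definition CC where "CC star X i j k = (1/8::complex) *\<^sub>C (\<i>^k *\<^sub>C X i j + cnj (\<i>^k) *\<^sub>C star (X i j))"

lemma key: assumes A: "op_sys_embedding star cone \<phi>" and X: "X \<in> mat_sa star n"
  and rs: "r < n" "s < n"
  shows "(\<Sum>t\<in>{..<n}\<times>{..<n}\<times>{..<4::nat}. ((case t of (i,j,k) \<Rightarrow> VV i j k) r * cnj ((case t of (i,j,k) \<Rightarrow> VV i j k) s)) *\<^sub>C (case t of (i,j,k) \<Rightarrow> CC star X i j k)) = X r s"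
proof -
  have step: "(\<Sum>k<(4::nat). (VV i j k r * cnj (VV i j k s)) *\<^sub>C CC star X i j k)
     = (if r = i \<and> s = j then (1/2) *\<^sub>C X i j else 0) + (if r = j \<and> s = i then (1/2) *\<^sub>C star (X i j) else 0)" for i j
  proof -
    have "(\<Sum>k<(4::nat). (VV i j k r * cnj (VV i j k s)) *\<^sub>C CC star X i j k)
      = (\<Sum>k<(4::nat). (VV i j k r * cnj (VV i j k s) * \<i> ^ k / 8) *\<^sub>C X i j
          + (VV i j k r * cnj (VV i j k s) * cnj (\<i> ^ k) / 8) *\<^sub>C star (X i j))"
      by (rule sum.cong) (simp_all add: CC_def scaleC_add_right scaleC_scaleC mult_ac)
    also have "\<dots> = (\<Sum>k<(4::nat). VV i j k r * cnj (VV i j k s) * \<i> ^ k / 8) *\<^sub>C X i j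
          + (\<Sum>k<(4::nat). VV i j k r * cnj (VV i j k s) * cnj (\<i> ^ k) / 8) *\<^sub>C star (X i j)"
      by (simp only: sum.distrib scC_l(4))
    also have "\<dots> = (if r = i \<and> s = j then (1/2) *\<^sub>C X i j else 0) + (if r = j \<and> s = i then (1/2) *\<^sub>C star (X i j) else 0)"
      unfolding S1 S2 if_scale ..
    finally show ?thesis .
  qed
  have "(\<Sum>t\<in>{..<n}\<times>{..<n}\<times>{..<4::nat}. ((case t of (i,j,k) \<Rightarrow> VV i j k) r * cnj ((case t of (i,j,k) \<Rightarrow> VV i j k) s)) *\<^sub>C (case t of (i,j,k) \<Rightarrow> CC star X i j k))
    = (\<Sum>t\<in>{..<n}\<times>{..<n}\<times>{..<4::nat}. case t of (i,j,k) \<Rightarrow> (VV i j k r * cnj (VV i j k s)) *\<^sub>C CC star X i j k)"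
    by (rule sum.cong) (auto split: prod.splits)
  also have "\<dots> = (\<Sum>i<n. \<Sum>j<n. \<Sum>k<(4::nat). (VV i j k r * cnj (VV i j k s)) *\<^sub>C CC star X i j k)"
    by (simp add: sum.cartesian_product)
  also have "\<dots> = (\<Sum>i<n. \<Sum>j<n. (if r = i \<and> s = j then (1/2) *\<^sub>C X i j else 0))
     + (\<Sum>i<n. \<Sum>j<n. (if r = j \<and> s = i then (1/2) *\<^sub>C star (X i j) else 0))"
    by (simp only: step sum.distrib)
  also have "\<dots> = (1/2) *\<^sub>C X r s + (1/2) *\<^sub>C star (X s r)"
    using rs by (simp only: dsum dsum')
  also have "star (X s r) = X r s"
  proof -
    have "X s r = star (X r s)" using X rs unfolding mat_sa_def by blast
    then show ?thesis by (simp add: E(1)[OF A])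
  qed
  also have "(1/2::complex) *\<^sub>C X r s + (1/2) *\<^sub>C X r s = X r s"
  proof -
    have "(1/2::complex) + 1/2 = 1" by simp
    then show ?thesis by (simp only: scaleC_add_left[symmetric] scaleC_one)
  qed
  finally show ?thesis .
qed

theorem proposition8p4:
  fixes star :: "'s::complex_vector \<Rightarrow> 's"
    and cone :: "nat \<Rightarrow> (nat \<Rightarrow> nat \<Rightarrow> 's) set"
    and \<phi> :: "'s \<Rightarrow> ('h::chilbert_space \<Rightarrow> 'h)"
  assumes "op_sys_embedding star cone \<phi>"
    and "positively_generated star cone"
  shows "\<forall>n\<ge>1. mat_sa star n = cone_diff cone n"
proof (intro allI impI)
  fix n :: nat
  note A = assms(1)
  show "mat_sa star n = cone_diff cone n"
  proof
    show "cone_diff cone n \<subseteq> mat_sa star n"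
    proof
      fix X assume "X \<in> cone_diff cone n"
      then obtain P Q where PQ: "P \<in> cone n" "Q \<in> cone n" "\<forall>i<n. \<forall>j<n. X i j = P i j - Q i j"
        unfolding cone_diff_def mem_Collect_eq by (elim bexE) blast
      show "X \<in> mat_sa star n" unfolding mat_sa_def mem_Collect_eq
      proof (intro allI impI)
        fix i j assume ij: "i < n" "j < n"
        have "X j i = P j i - Q j i" using PQ(3) ij by blast
        also have "\<dots> = star (P i j) - star (Q i j)"
          using cone_herm[OF A PQ(1) ij] cone_herm[OF A PQ(2) ij] by simp
        also have "\<dots> = star (P i j - Q i j)" by (simp add: E2(1)[OF A])
        also have "P i j - Q i j = X i j" using PQ(3) ij by simp
        finally show "X j i = star (X i j)" .
      qed
    qed
  next
    show "mat_sa star n \<subseteq> cone_diff cone n"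
    proof
      fix X assume X: "X \<in> mat_sa star n"
      let ?F = "{..<n}\<times>{..<n}\<times>{..<4::nat}"
      let ?v = "\<lambda>t. case t of (i,j,k) \<Rightarrow> VV i j k"
      let ?c = "\<lambda>t. case t of (i,j,k) \<Rightarrow> CC star X i j k"
      have cs: "\<forall>t\<in>?F. star (?c t) = ?c t"
        by (auto simp: CC_def E[OF A] add.commute)
      have "(\<lambda>r s. \<Sum>t\<in>?F. (?v t r * cnj (?v t s)) *\<^sub>C ?c t) \<in> cone_diff cone n"
        by (rule combo[OF A assms(2) _ cs]) simp
      then obtain P Q where PQ: "P \<in> cone n" "Q \<in> cone n"
        "\<forall>i<n. \<forall>j<n. (\<Sum>t\<in>?F. (?v t i * cnj (?v t j)) *\<^sub>C ?c t) = P i j - Q i j"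
        unfolding cone_diff_def mem_Collect_eq by (elim bexE) blast
      have "\<forall>i<n. \<forall>j<n. X i j = P i j - Q i j"
      proof (intro allI impI)
        fix i j assume ij: "i < n" "j < n"
        have "X i j = (\<Sum>t\<in>?F. (?v t i * cnj (?v t j)) *\<^sub>C ?c t)"
          using key[OF A X ij] by (rule sym)
        also have "\<dots> = P i j - Q i j" using PQ(3) ij by blast
        finally show "X i j = P i j - Q i j" .
      qed
      then show "X \<in> cone_diff cone n"
        unfolding cone_diff_def mem_Collect_eq using PQ(1,2) by blast
    qed
  qed
qed

end
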